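(* Writing $t^{\boldsymbol\mu}_{q,\sigma}$ for $t_\sigma$ computed with the potentials $\boldsymbol\psi_q^{\boldsymbol\mu}$, $$\lim_{q\to+\infty}\frac{-1}{q}\max_{\sigma\in\mathcal A}\sup_{\mathbf P_{\!\sigma}\in\mathcal Q^\sigma}t^{\boldsymbol\mu}_{q,\sigma}(\mathbf P_{\!\sigma})=\min_{\sigma\in\mathcal A}\inf_{\mathbf P_{\!\sigma}\in\mathcal Q^\sigma}S_\sigma(\mathbf P_{\!\sigma}),\qquad \lim_{q\to-\infty}\frac{-1}{q}\max_{\sigma\in\mathcal A}\sup_{\mathbf P_{\!\sigma}\in\mathcal Q^\sigma}t^{\boldsymbol\mu}_{q,\sigma}(\mathbf P_{\!\sigma})=\max_{\sigma\in\mathcal A}\sup_{\mathbf P_{\!\sigma}\in\mathcal Q^\sigma}S_\sigma(\mathbf P_{\!\sigma}).$$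
   Context: Setup: $d\ge1$, $\mathcal I=\{1,\dots,N\}$, affine maps $f_i$ with linear parts $\mathrm{diag}(a_i^{(1)},\dots,a_i^{(d)})$, $\lambda_i^{(n)}=|a_i^{(n)}|\in(0,1)$, no two distinct maps agree on $[0,1]^d$. For a permutation $\sigma$, $\Pi_n^\sigma$ = orthogonal projection onto the span of coordinate axes $\sigma_1,\dots,\sigma_n$; $f_i,f_j$ overlap exactly if $\Pi_n^\sigma f_i=\Pi_n^\sigma f_j$ on $[0,1]^d$; $\mathcal I_n^\sigma$ = smallest elements of classes, $\Pi_n^\sigma j$ = smallest element of class of $j$. $\mathcal A$ = set of permutations $\sigma$ for which some $\mathbf i\in\mathcal I^{\mathbb N}$, $\delta>0$ have $L_\delta(\mathbf i,\sigma_d)\le\dots\le L_\delta(\mathbf i,\sigma_1)$ (ties broken by $\sigma_n>\sigma_{n-1}$), $L_\delta(\mathbf i,n)$ the unique integer with $\prod_{\ell\le L_\delta(\mathbf i,n)}\lambda_{i_\ell}^{(n)}\le\delta<\prod_{\ell\le L_\delta(\mathbf i,n)-1}\lambda_{i_\ell}^{(n)}$. Variational: $\mathcal P_n^\sigma$ = probability vectors on $\mathcal I_n^\sigma$, $\mathcal P^\sigma=\mathcal P_d^\sigma\times\dots\times\mathcal P_1^\sigma$, elements $(\mathbf p_{\sigma_d},\dots,\mathbf p_{\sigma_1})$; $H$ Shannon entropy; $\chi_n^\sigma(\mathbf p_{\sigma_m})=-\sum_{i\in\mathcal I_m^\sigma}p_{\sigma_m}(i)\log\lambda_i^{(\sigma_n)}$;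 $C_d^{(d),\sigma}=1/\chi_d^\sigma(\mathbf p_{\sigma_d})$, $C_n^{(d),\sigma}=(1-\sum_{m>n}C_m^{(d),\sigma}\chi_n^\sigma(\mathbf p_{\sigma_m}))/\chi_n^\sigma(\mathbf p_{\sigma_n})$; $\mathcal Q^\sigma=\{\mathbf P_{\!\sigma}:C_n^{(d),\sigma}(\mathbf P_{\!\sigma})\ge0\ \forall n\}$. Measure: $\boldsymbol\mu$ strictly positive probability vector on $\mathcal I$, $\mu_n^\sigma(i)=\sum_{j:\Pi_n^\sigma j=i}\mu(j)$. $\boldsymbol\psi_q^{\boldsymbol\mu}=\{\psi^{\boldsymbol\mu,\sigma}_{q,n}\}$ with $\psi^{\boldsymbol\mu,\sigma}_{q,n}(i)=q\log\mu_n^\sigma(i)$, so $t^{\boldsymbol\mu}_{q,\sigma}(\mathbf P_{\!\sigma})=\sum_nC_n^{(d),\sigma}(\mathbf P_{\!\sigma})\big(H(\mathbf p_{\sigma_n})+q\sum_{i\in\mathcal I_n^\sigma}p_{\sigma_n}(i)\log\mu_n^\sigma(i)\big)$. $S_\sigma(\mathbf P_{\!\sigma})=-\sum_nC_n^{(d),\sigma}(\mathbf P_{\!\sigma})\sum_{i\in\mathcal I_n^\sigma}p_{\sigma_n}(i)\log\mu_n^\sigma(i)$. *)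

theory Defs
  imports "HOL-Combinatorics.Permutations" "HOL-Library.Extended_Real"
begin

text \<open>Maps are indexed by 1..N, coordinates by 1..d.
  a i c is the c-th diagonal entry of the linear part of f_i, t i c the c-th translation entry.\<close>

definition fmap :: "(nat \<Rightarrow> nat \<Rightarrow> real) \<Rightarrow> (nat \<Rightarrow> nat \<Rightarrow> real) \<Rightarrow> nat \<Rightarrow> (nat \<Rightarrow> real) \<Rightarrow> nat \<Rightarrow> real" where
  "fmap a t i x c = a i c * x c + t i c"

definition cube :: "nat \<Rightarrow> (nat \<Rightarrow> real) set" where
  "cube d = {x. \<forall>c\<in>{1..d}. 0 \<le> x c \<and> x c \<le> 1}"

definition overlap :: "nat \<Rightarrow> (nat \<Rightarrow> nat \<Rightarrow> real) \<Rightarrow> (nat \<Rightarrow> nat \<Rightarrow> real) \<Rightarrow> (nat \<Rightarrow> nat) \<Rightarrow> nat \<Rightarrow> nat \<Rightarrow> nat \<Rightarrow> bool" where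
  "overlap d a t \<sigma> n i j \<longleftrightarrow> (\<forall>x\<in>cube d. \<forall>k\<in>{1..n}. fmap a t i x (\<sigma> k) = fmap a t j x (\<sigma> k))"

definition projIdx :: "nat \<Rightarrow> nat \<Rightarrow> (nat \<Rightarrow> nat \<Rightarrow> real) \<Rightarrow> (nat \<Rightarrow> nat \<Rightarrow> real) \<Rightarrow> (nat \<Rightarrow> nat) \<Rightarrow> nat \<Rightarrow> nat \<Rightarrow> nat" where
  "projIdx d N a t \<sigma> n j = Min {k\<in>{1..N}. overlap d a t \<sigma> n k j}"

definition Iset :: "nat \<Rightarrow> nat \<Rightarrow> (nat \<Rightarrow> nat \<Rightarrow> real) \<Rightarrow> (nat \<Rightarrow> nat \<Rightarrow> real) \<Rightarrow> (nat \<Rightarrow> nat) \<Rightarrow> nat \<Rightarrow> nat set" where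
  "Iset d N a t \<sigma> n = {j\<in>{1..N}. projIdx d N a t \<sigma> n j = j}"

definition lam :: "(nat \<Rightarrow> nat \<Rightarrow> real) \<Rightarrow> nat \<Rightarrow> nat \<Rightarrow> real" where
  "lam a i n = \<bar>a i n\<bar>"

text \<open>L_delta(i, n); for 0 < delta < 1 this is the unique integer L with
  prod_{l<=L} lambda \<le> delta < prod_{l<=L-1} lambda.\<close>
definition Ldelta :: "(nat \<Rightarrow> nat \<Rightarrow> real) \<Rightarrow> (nat \<Rightarrow> nat) \<Rightarrow> real \<Rightarrow> nat \<Rightarrow> nat" where
  "Ldelta a ii \<delta> n = (LEAST L::nat. (\<Prod>l\<in>{1..L}. lam a (ii l) n) \<le> \<delta>)"

definition Aset :: "nat \<Rightarrow> nat \<Rightarrow> (nat \<Rightarrow> nat \<Rightarrow> real) \<Rightarrow> (nat \<Rightarrow> nat) set" where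
  "Aset d N a = {\<sigma>. \<sigma> permutes {1..d} \<and>
     (\<exists>ii \<delta>. (\<forall>l. ii l \<in> {1..N}) \<and> 0 < \<delta> \<and> \<delta> < 1 \<and>
        (\<forall>n\<in>{2..d}. Ldelta a ii \<delta> (\<sigma> n) < Ldelta a ii \<delta> (\<sigma> (n - 1)) \<or>
            (Ldelta a ii \<delta> (\<sigma> n) = Ldelta a ii \<delta> (\<sigma> (n - 1)) \<and> \<sigma> (n - 1) < \<sigma> n)))}"

text \<open>P n i = p_{sigma_n}(i): a probability vector on I_n^sigma for each n in 1..d.\<close>
definition Pset :: "nat \<Rightarrow> nat \<Rightarrow> (nat \<Rightarrow> nat \<Rightarrow> real) \<Rightarrow> (nat \<Rightarrow> nat \<Rightarrow> real) \<Rightarrow> (nat \<Rightarrow> nat) \<Rightarrow> (nat \<Rightarrow> nat \<Rightarrow> real) set" where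
  "Pset d N a t \<sigma> = {P. (\<forall>n\<in>{1..d}. (\<forall>i\<in>Iset d N a t \<sigma> n. 0 \<le> P n i)
        \<and> (\<Sum>i\<in>Iset d N a t \<sigma> n. P n i) = 1
        \<and> (\<forall>i. i \<notin> Iset d N a t \<sigma> n \<longrightarrow> P n i = 0))
      \<and> (\<forall>n. n \<notin> {1..d} \<longrightarrow> P n = (\<lambda>_. 0))}"

text \<open>chi d N a t sigma P n m = chi_n^sigma(p_{sigma_m}).\<close>
definition chi :: "nat \<Rightarrow> nat \<Rightarrow> (nat \<Rightarrow> nat \<Rightarrow> real) \<Rightarrow> (nat \<Rightarrow> nat \<Rightarrow> real) \<Rightarrow> (nat \<Rightarrow> nat) \<Rightarrow> (nat \<Rightarrow> nat \<Rightarrow> real) \<Rightarrow> nat \<Rightarrow> nat \<Rightarrow> real" where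
  "chi d N a t \<sigma> P n m = - (\<Sum>i\<in>Iset d N a t \<sigma> m. P m i * ln (lam a i (\<sigma> n)))"

function Ccoef :: "nat \<Rightarrow> (nat \<Rightarrow> nat \<Rightarrow> real) \<Rightarrow> nat \<Rightarrow> real" where
  "Ccoef d ch n = (if d < n then 0 else
      (1 - (\<Sum>m\<in>{n<..d}. Ccoef d ch m * ch n m)) / ch n n)"
  by auto
termination
  by (relation "measure (\<lambda>(d, ch, n). d - n)") auto

definition Cn :: "nat \<Rightarrow> nat \<Rightarrow> (nat \<Rightarrow> nat \<Rightarrow> real) \<Rightarrow> (nat \<Rightarrow> nat \<Rightarrow> real) \<Rightarrow> (nat \<Rightarrow> nat) \<Rightarrow> (nat \<Rightarrow> nat \<Rightarrow> real) \<Rightarrow> nat \<Rightarrow> real" where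
  "Cn d N a t \<sigma> P n = Ccoef d (chi d N a t \<sigma> P) n"

definition Qset :: "nat \<Rightarrow> nat \<Rightarrow> (nat \<Rightarrow> nat \<Rightarrow> real) \<Rightarrow> (nat \<Rightarrow> nat \<Rightarrow> real) \<Rightarrow> (nat \<Rightarrow> nat) \<Rightarrow> (nat \<Rightarrow> nat \<Rightarrow> real) set" where
  "Qset d N a t \<sigma> = {P\<in>Pset d N a t \<sigma>. \<forall>n\<in>{1..d}. 0 \<le> Cn d N a t \<sigma> P n}"

text \<open>Shannon entropy of p_{sigma_n} (ln 0 = 0 in Isabelle, so 0 log 0 = 0).\<close>
definition ent :: "nat \<Rightarrow> nat \<Rightarrow> (nat \<Rightarrow> nat \<Rightarrow> real) \<Rightarrow> (nat \<Rightarrow> nat \<Rightarrow> real) \<Rightarrow> (nat \<Rightarrow> nat) \<Rightarrow> (nat \<Rightarrow> nat \<Rightarrow> real) \<Rightarrow> nat \<Rightarrow> real" where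
  "ent d N a t \<sigma> P n = - (\<Sum>i\<in>Iset d N a t \<sigma> n. P n i * ln (P n i))"

definition muProj :: "nat \<Rightarrow> nat \<Rightarrow> (nat \<Rightarrow> nat \<Rightarrow> real) \<Rightarrow> (nat \<Rightarrow> nat \<Rightarrow> real) \<Rightarrow> (nat \<Rightarrow> real) \<Rightarrow> (nat \<Rightarrow> nat) \<Rightarrow> nat \<Rightarrow> nat \<Rightarrow> real" where
  "muProj d N a t \<mu> \<sigma> n i = (\<Sum>j\<in>{j\<in>{1..N}. projIdx d N a t \<sigma> n j = i}. \<mu> j)"

definition tq :: "nat \<Rightarrow> nat \<Rightarrow> (nat \<Rightarrow> nat \<Rightarrow> real) \<Rightarrow> (nat \<Rightarrow> nat \<Rightarrow> real) \<Rightarrow> (nat \<Rightarrow> real) \<Rightarrow> real \<Rightarrow> (nat \<Rightarrow> nat) \<Rightarrow> (nat \<Rightarrow> nat \<Rightarrow> real) \<Rightarrow> real" where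
  "tq d N a t \<mu> q \<sigma> P = (\<Sum>n\<in>{1..d}. Cn d N a t \<sigma> P n *
      (ent d N a t \<sigma> P n + q * (\<Sum>i\<in>Iset d N a t \<sigma> n. P n i * ln (muProj d N a t \<mu> \<sigma> n i))))"

definition Sfun :: "nat \<Rightarrow> nat \<Rightarrow> (nat \<Rightarrow> nat \<Rightarrow> real) \<Rightarrow> (nat \<Rightarrow> nat \<Rightarrow> real) \<Rightarrow> (nat \<Rightarrow> real) \<Rightarrow> (nat \<Rightarrow> nat) \<Rightarrow> (nat \<Rightarrow> nat \<Rightarrow> real) \<Rightarrow> real" where
  "Sfun d N a t \<mu> \<sigma> P = - (\<Sum>n\<in>{1..d}. Cn d N a t \<sigma> P n *
      (\<Sum>i\<in>Iset d N a t \<sigma> n. P n i * ln (muProj d N a t \<mu> \<sigma> n i)))"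

end

theory Submission
  imports Defs
begin

declare Ccoef.simps[simp del]


lemma neg_mult_anti:
  fixes x y :: ereal assumes "c < 0" "x \<le> y" shows "ereal c * y \<le> ereal c * x"
proof -
  have "ereal (-c) * x \<le> ereal (-c) * y" using assms by (intro ereal_mult_left_mono) auto
  moreover have "ereal c * z = - (ereal (-c) * z)" for z by (cases z) auto
  ultimately show ?thesis by (simp add: ereal_uminus_le_reorder)
qed

lemma abstract:
  fixes A :: "'a set" and Q :: "'a \<Rightarrow> 'b set" and E S :: "'a \<Rightarrow> 'b \<Rightarrow> real" and B :: real
  assumes bd: "\<forall>\<sigma>\<in>A. \<forall>P\<in>Q \<sigma>. \<bar>E \<sigma> P\<bar> \<le> B \<and> \<bar>S \<sigma> P\<bar> \<le> B"
  shows "((\<lambda>q. ereal (-1/q) * (SUP \<sigma>\<in>A. SUP P\<in>Q \<sigma>. ereal (E \<sigma> P - q * S \<sigma> P)))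
            \<longlongrightarrow> (INF \<sigma>\<in>A. INF P\<in>Q \<sigma>. ereal (S \<sigma> P))) at_top
       \<and> ((\<lambda>q. ereal (-1/q) * (SUP \<sigma>\<in>A. SUP P\<in>Q \<sigma>. ereal (E \<sigma> P - q * S \<sigma> P)))
            \<longlongrightarrow> (SUP \<sigma>\<in>A. SUP P\<in>Q \<sigma>. ereal (S \<sigma> P))) at_bot"
proof (cases "\<forall>\<sigma>\<in>A. Q \<sigma> = {}")
  case True
  then have e1: "(SUP \<sigma>\<in>A. SUP P\<in>Q \<sigma>. f \<sigma> P) = (-\<infinity>::ereal)" for f
    by (simp add: SUP_constant bot_ereal_def) 
  have e2: "(INF \<sigma>\<in>A. INF P\<in>Q \<sigma>. f \<sigma> P) = (\<infinity>::ereal)" for f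
    using True by (cases "A = {}") (simp_all add: top_ereal_def)
  have t1: "\<forall>\<^sub>F q in at_top. ereal (-1/q) * (-\<infinity>) = (\<infinity>::ereal)"
    using eventually_gt_at_top[of "0::real"] by eventually_elim auto
  have t2: "\<forall>\<^sub>F q in at_bot. ereal (-1/q) * (-\<infinity>) = (-\<infinity>::ereal)"
    using eventually_gt_at_bot[of "0::real"] by eventually_elim (auto simp: field_simps)
  show ?thesis unfolding e1 e2
    using tendsto_eventually[OF t1] tendsto_eventually[OF t2] by simp
next
  case False
  then obtain \<sigma>0 P0 where s0: "\<sigma>0 \<in> A" "P0 \<in> Q \<sigma>0" by auto
  define I where "I = (INF \<sigma>\<in>A. INF P\<in>Q \<sigma>. ereal (S \<sigma> P))"
  define J where "J = (SUP \<sigma>\<in>A. SUP P\<in>Q \<sigma>. ereal (S \<sigma> P))"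
  define T where "T q = (SUP \<sigma>\<in>A. SUP P\<in>Q \<sigma>. ereal (E \<sigma> P - q * S \<sigma> P))" for q
  have Ilow: "ereal (-B) \<le> I" unfolding I_def
    using bd by (intro INF_greatest) (force simp: abs_le_iff)
  have Iup: "I \<le> ereal (S \<sigma>0 P0)" unfolding I_def
    using s0 by (intro INF_lower2[OF s0(1)] INF_lower[OF s0(2)])
  obtain Ir where Ir: "I = ereal Ir" using Ilow Iup by (cases I) auto
  have Jup: "J \<le> ereal B" unfolding J_def
    using bd by (intro SUP_least) (force simp: abs_le_iff)
  have Jlow: "ereal (S \<sigma>0 P0) \<le> J" unfolding J_def
    using s0 by (intro SUP_upper2[OF s0(1)] SUP_upper[OF s0(2)])
  obtain Jr where Jr: "J = ereal Jr" using Jup Jlow by (cases J) auto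
  have Eb: "\<bar>E \<sigma> P\<bar> \<le> B" "\<bar>S \<sigma> P\<bar> \<le> B" if "\<sigma> \<in> A" "P \<in> Q \<sigma>" for \<sigma> P
    using bd that by blast+
  have SI: "Ir \<le> S \<sigma> P" if "\<sigma> \<in> A" "P \<in> Q \<sigma>" for \<sigma> P
  proof -
    have "I \<le> ereal (S \<sigma> P)" unfolding I_def using that by (intro INF_lower2[OF that(1)] INF_lower[OF that(2)])
    then show ?thesis using Ir by simp
  qed
  have SJ: "S \<sigma> P \<le> Jr" if "\<sigma> \<in> A" "P \<in> Q \<sigma>" for \<sigma> P
  proof -
    have "ereal (S \<sigma> P) \<le> J" unfolding J_def using that by (intro SUP_upper2[OF that(1)] SUP_upper[OF that(2)])
    then show ?thesis using Jr by simp
  qed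
  have Tge: "ereal (E \<sigma> P - q * S \<sigma> P) \<le> T q" if "\<sigma> \<in> A" "P \<in> Q \<sigma>" for \<sigma> P q
    unfolding T_def using that by (intro SUP_upper2[OF that(1)] SUP_upper[OF that(2)])
  have part1: "((\<lambda>q. ereal (-1/q) * T q) \<longlongrightarrow> I) at_top"
  proof (rule tendsto_sandwich[where f="\<lambda>q. ereal (Ir - B/q)" and h="\<lambda>q. ereal (Ir + B/q)"])
    show "\<forall>\<^sub>F q in at_top. ereal (Ir - B/q) \<le> ereal (-1/q) * T q"
      using eventually_gt_at_top[of "0::real"]
    proof eventually_elim
      case (elim q)
      have "T q \<le> ereal (B - q * Ir)" unfolding T_def
      proof (intro SUP_least)
        fix \<sigma> P assume h: "\<sigma> \<in> A" "P \<in> Q \<sigma>"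
        have "E \<sigma> P \<le> B" using Eb[OF h] by auto
        moreover have "q * Ir \<le> q * S \<sigma> P" using SI[OF h] elim by (simp add: mult_left_mono)
        ultimately show "ereal (E \<sigma> P - q * S \<sigma> P) \<le> ereal (B - q * Ir)" by simp
      qed
      then have "ereal (-1/q) * ereal (B - q * Ir) \<le> ereal (-1/q) * T q"
        using elim by (intro neg_mult_anti) auto
      moreover have "-1/q * (B - q * Ir) = Ir - B/q" using elim by (simp add: field_simps)
      ultimately show ?case by simp
    qed
    show "\<forall>\<^sub>F q in at_top. ereal (-1/q) * T q \<le> ereal (Ir + B/q)"
      using eventually_gt_at_top[of "0::real"]
    proof eventually_elim
      case (elim q)
      have "ereal (-1/q) * T q - ereal (B/q) \<le> I" unfolding I_def
      proof (intro INF_greatest)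
        fix \<sigma> P assume h: "\<sigma> \<in> A" "P \<in> Q \<sigma>"
        have "ereal (-1/q) * T q \<le> ereal (-1/q) * ereal (E \<sigma> P - q * S \<sigma> P)"
          using elim Tge[OF h] by (intro neg_mult_anti) auto
        moreover have "-1/q * (E \<sigma> P - q * S \<sigma> P) \<le> S \<sigma> P + B/q"
        proof -
          have "-1/q * (E \<sigma> P - q * S \<sigma> P) = S \<sigma> P - E \<sigma> P / q" using elim by (simp add: field_simps)
          moreover have "- E \<sigma> P / q \<le> B / q" using Eb[OF h] elim by (intro divide_right_mono) auto
          ultimately show ?thesis by simp
        qed
        ultimately have "ereal (-1/q) * T q \<le> ereal (S \<sigma> P + B/q)"
          using order_trans[of "ereal (-1/q) * T q" "ereal (-1/q * (E \<sigma> P - q * S \<sigma> P))" "ereal (S \<sigma> P + B/q)"]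
          by (simp only: times_ereal.simps(1) ereal_less_eq(3))
        then show "ereal (-1/q) * T q - ereal (B/q) \<le> ereal (S \<sigma> P)"
          using ereal_minus_le[of "ereal (B/q)" "ereal (-1/q) * T q" "ereal (S \<sigma> P)"] by simp
      qed
      then show ?case using Ir ereal_minus_le[of "ereal (B/q)" "ereal (-1/q) * T q" I] by simp
    qed
    have B0: "((\<lambda>q::real. B/q) \<longlongrightarrow> 0) at_top"
      by (rule tendsto_divide_0[OF tendsto_const filterlim_at_top_imp_at_infinity[OF filterlim_ident]])
    have "((\<lambda>q. Ir - B/q) \<longlongrightarrow> Ir - 0) at_top"
      by (rule tendsto_diff[OF tendsto_const B0])
    then show "((\<lambda>q. ereal (Ir - B/q)) \<longlongrightarrow> I) at_top" using Ir by (simp add: tendsto_ereal)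
    have "((\<lambda>q. Ir + B/q) \<longlongrightarrow> Ir + 0) at_top"
      by (rule tendsto_add[OF tendsto_const B0])
    then show "((\<lambda>q. ereal (Ir + B/q)) \<longlongrightarrow> I) at_top" using Ir by (simp add: tendsto_ereal)
  qed
  have part2: "((\<lambda>q. ereal (-1/q) * T q) \<longlongrightarrow> J) at_bot"
  proof (rule tendsto_sandwich[where f="\<lambda>q. ereal (Jr + B/q)" and h="\<lambda>q. ereal (Jr - B/q)"])
    show "\<forall>\<^sub>F q in at_bot. ereal (Jr + B/q) \<le> ereal (-1/q) * T q"
      using eventually_gt_at_bot[of "0::real"]
    proof eventually_elim
      case (elim q)
      have "J \<le> ereal (-1/q) * T q - ereal (B/q)" unfolding J_def
      proof (intro SUP_least)
        fix \<sigma> P assume h: "\<sigma> \<in> A" "P \<in> Q \<sigma>"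
        have "ereal (-1/q) * ereal (E \<sigma> P - q * S \<sigma> P) \<le> ereal (-1/q) * T q"
          using elim Tge[OF h] by (intro ereal_mult_left_mono) auto
        moreover have "S \<sigma> P + B/q \<le> -1/q * (E \<sigma> P - q * S \<sigma> P)"
        proof -
          have "-1/q * (E \<sigma> P - q * S \<sigma> P) = S \<sigma> P - E \<sigma> P / q" using elim by (simp add: field_simps)
          moreover have "B / q \<le> - E \<sigma> P / q" using Eb[OF h] elim by (intro divide_right_mono_neg) auto
          ultimately show ?thesis by simp
        qed
        ultimately have "ereal (S \<sigma> P + B/q) \<le> ereal (-1/q) * T q"
          using order_trans[of "ereal (S \<sigma> P + B/q)" "ereal (-1/q * (E \<sigma> P - q * S \<sigma> P))" "ereal (-1/q) * T q"]
          by (simp only: times_ereal.simps(1) ereal_less_eq(3))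
        then show "ereal (S \<sigma> P) \<le> ereal (-1/q) * T q - ereal (B/q)"
          using ereal_le_minus[of "ereal (B/q)" "ereal (S \<sigma> P)" "ereal (-1/q) * T q"] by simp
      qed
      then show ?case using Jr ereal_le_minus[of "ereal (B/q)" J "ereal (-1/q) * T q"] by simp
    qed
    show "\<forall>\<^sub>F q in at_bot. ereal (-1/q) * T q \<le> ereal (Jr - B/q)"
      using eventually_gt_at_bot[of "0::real"]
    proof eventually_elim
      case (elim q)
      have "T q \<le> ereal (B - q * Jr)" unfolding T_def
      proof (intro SUP_least)
        fix \<sigma> P assume h: "\<sigma> \<in> A" "P \<in> Q \<sigma>"
        have "E \<sigma> P \<le> B" using Eb[OF h] by auto
        moreover have "(-q) * S \<sigma> P \<le> (-q) * Jr" using SJ[OF h] elim by (intro mult_left_mono) auto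
        ultimately show "ereal (E \<sigma> P - q * S \<sigma> P) \<le> ereal (B - q * Jr)" by simp
      qed
      then have "ereal (-1/q) * T q \<le> ereal (-1/q) * ereal (B - q * Jr)"
        using elim by (intro ereal_mult_left_mono) auto
      moreover have "-1/q * (B - q * Jr) = Jr - B/q" using elim by (simp add: field_simps)
      ultimately show ?case by simp
    qed
    have B0: "((\<lambda>q::real. B/q) \<longlongrightarrow> 0) at_bot"
      by (rule tendsto_divide_0[OF tendsto_const filterlim_mono[OF filterlim_ident at_bot_le_at_infinity order_refl]])
    have "((\<lambda>q. Jr - B/q) \<longlongrightarrow> Jr - 0) at_bot"
      by (rule tendsto_diff[OF tendsto_const B0])
    then show "((\<lambda>q. ereal (Jr - B/q)) \<longlongrightarrow> J) at_bot" using Jr by (simp add: tendsto_ereal)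
    have "((\<lambda>q. Jr + B/q) \<longlongrightarrow> Jr + 0) at_bot"
      by (rule tendsto_add[OF tendsto_const B0])
    then show "((\<lambda>q. ereal (Jr + B/q)) \<longlongrightarrow> J) at_bot" using Jr by (simp add: tendsto_ereal)
  qed
  show ?thesis using part1 part2 unfolding T_def I_def J_def by simp
qed



lemma plnp_bound: fixes p :: real assumes "0 \<le> p" "p \<le> 1" shows "\<bar>p * ln p\<bar> \<le> 1"
proof (cases "p = 0")
  case False
  then have pp: "0 < p" using assms by auto
  have lp: "ln p \<le> 0" using pp assms by simp
  have "ln (1/p) \<le> 1/p - 1" using pp by (intro ln_le_minus_one) auto
  then have "- ln p \<le> 1/p - 1" using pp by (simp add: ln_div)
  then have "p * (- ln p) \<le> p * (1/p - 1)" using pp by (intro mult_left_mono) auto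
  moreover have "p * (1/p - 1) = 1 - p" using pp by (simp add: field_simps)
  ultimately have "- (p * ln p) \<le> 1 - p" by simp
  moreover have "p * ln p \<le> 0" using lp pp by (simp add: mult_nonneg_nonpos)
  ultimately show ?thesis using pp assms by (simp add: abs_if)
qed simp

lemma Iset_sub: "Iset d N a t \<sigma> n \<subseteq> {1..N}" unfolding Iset_def by auto

lemma fin_Iset: "finite (Iset d N a t \<sigma> n)" by (rule finite_subset[OF Iset_sub]) simp

lemma P_props:
  assumes "P \<in> Pset d N a t \<sigma>" "n \<in> {1..d}" "i \<in> Iset d N a t \<sigma> n"
  shows "0 \<le> P n i" "P n i \<le> 1"
proof -
  show "0 \<le> P n i" using assms unfolding Pset_def by auto
  have "P n i \<le> (\<Sum>j\<in>Iset d N a t \<sigma> n. P n j)"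
    using assms fin_Iset by (intro member_le_sum) (auto simp: Pset_def)
  then show "P n i \<le> 1" using assms unfolding Pset_def by auto
qed

lemma P_sum: assumes "P \<in> Pset d N a t \<sigma>" "n \<in> {1..d}" shows "(\<Sum>j\<in>Iset d N a t \<sigma> n. P n j) = 1"
  using assms unfolding Pset_def by auto

lemma ent_bound:
  assumes "P \<in> Pset d N a t \<sigma>" "n \<in> {1..d}"
  shows "\<bar>ent d N a t \<sigma> P n\<bar> \<le> real N"
proof -
  have "\<bar>ent d N a t \<sigma> P n\<bar> \<le> (\<Sum>i\<in>Iset d N a t \<sigma> n. \<bar>P n i * ln (P n i)\<bar>)"
    unfolding ent_def abs_minus_cancel by (rule sum_abs)
  also have "\<dots> \<le> (\<Sum>i\<in>Iset d N a t \<sigma> n. 1)"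
    using P_props[OF assms] by (intro sum_mono plnp_bound) auto
  also have "\<dots> = real (card (Iset d N a t \<sigma> n))" by simp
  also have "\<dots> \<le> real N" using card_mono[OF finite_atLeastAtMost[of 1 N] Iset_sub[of d N a t \<sigma> n]] by simp
  finally show ?thesis .
qed

lemma chi_lower:
  assumes "P \<in> Pset d N a t \<sigma>" "m \<in> {1..d}" "\<sigma> n \<in> {1..d}"
    and c0: "\<forall>i\<in>{1..N}. \<forall>k\<in>{1..d}. c0 \<le> - ln (lam a i k)"
  shows "c0 * (\<Sum>j\<in>Iset d N a t \<sigma> m. P m j) \<le> chi d N a t \<sigma> P n m"
proof -
  have "c0 * (\<Sum>j\<in>Iset d N a t \<sigma> m. P m j) = (\<Sum>j\<in>Iset d N a t \<sigma> m. P m j * c0)"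
    by (simp add: sum_distrib_left mult.commute)
  also have "\<dots> \<le> (\<Sum>j\<in>Iset d N a t \<sigma> m. P m j * (- ln (lam a j (\<sigma> n))))"
  proof (intro sum_mono mult_left_mono)
    fix j assume j: "j \<in> Iset d N a t \<sigma> m"
    then have "j \<in> {1..N}" using Iset_sub by blast
    then show "c0 \<le> - ln (lam a j (\<sigma> n))" using c0 assms(3) by blast
    show "0 \<le> P m j" using P_props(1)[OF assms(1,2) j] .
  qed
  also have "\<dots> = chi d N a t \<sigma> P n m" unfolding chi_def by (simp add: sum_negf)
  finally show ?thesis .
qed




lemma C_upper:
  assumes "P \<in> Qset d N a t \<sigma>" "n \<in> {1..d}" "\<sigma> permutes {1..d}" "0 < c0"
    and c0: "\<forall>i\<in>{1..N}. \<forall>k\<in>{1..d}. c0 \<le> - ln (lam a i k)"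
  shows "Cn d N a t \<sigma> P n \<le> 1 / c0"
proof -
  have PP: "P \<in> Pset d N a t \<sigma>" and Cnn: "\<forall>m\<in>{1..d}. 0 \<le> Cn d N a t \<sigma> P m"
    using assms(1) unfolding Qset_def by auto
  have sn: "\<sigma> n \<in> {1..d}" using assms(2) permutes_in_image[OF assms(3)] by blast
  let ?ch = "chi d N a t \<sigma> P"
  have chn: "c0 \<le> ?ch n n" using chi_lower[OF PP assms(2) sn c0] P_sum[OF PP assms(2)] by simp
  have s0: "0 \<le> (\<Sum>m\<in>{n<..d}. Ccoef d ?ch m * ?ch n m)"
  proof (intro sum_nonneg mult_nonneg_nonneg)
    fix m assume m: "m \<in> {n<..d}"
    then have m1: "m \<in> {1..d}" using assms(2) by auto
    show "0 \<le> Ccoef d ?ch m" using Cnn m1 unfolding Cn_def by auto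
    show "0 \<le> ?ch n m" using chi_lower[OF PP m1 sn c0] P_sum[OF PP m1] assms(4) by simp
  qed
  have "Cn d N a t \<sigma> P n = (1 - (\<Sum>m\<in>{n<..d}. Ccoef d ?ch m * ?ch n m)) / ?ch n n"
    unfolding Cn_def using assms(2) by (subst Ccoef.simps) simp
  also have "\<dots> \<le> 1 / ?ch n n" using s0 chn assms(4) by (intro divide_right_mono) auto
  also have "\<dots> \<le> 1 / c0" using chn assms(4) by (intro divide_left_mono) auto
  finally show ?thesis .
qed

lemma mu_bound:
  assumes "i \<in> Iset d N a t \<sigma> n" and mu: "\<forall>i\<in>{1..N}. 0 < \<mu> i" "(\<Sum>i\<in>{1..N}. \<mu> i) = 1"
    and m0: "\<forall>i\<in>{1..N}. m0 \<le> \<mu> i" "0 < m0"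
  shows "\<bar>ln (muProj d N a t \<mu> \<sigma> n i)\<bar> \<le> - ln m0"
proof -
  let ?X = "{j\<in>{1..N}. projIdx d N a t \<sigma> n j = i}"
  have iX: "i \<in> ?X" using assms(1) unfolding Iset_def by auto
  have mu0: "0 \<le> \<mu> j" if "j \<in> {1..N}" for j using mu(1) that less_imp_le by blast
  have "\<mu> i \<le> muProj d N a t \<mu> \<sigma> n i" unfolding muProj_def
    using iX mu0 by (intro member_le_sum) auto
  then have lo: "m0 \<le> muProj d N a t \<mu> \<sigma> n i" using m0 iX by force
  have "muProj d N a t \<mu> \<sigma> n i \<le> (\<Sum>i\<in>{1..N}. \<mu> i)" unfolding muProj_def
    using mu0 by (intro sum_mono2) auto
  then have hi: "muProj d N a t \<mu> \<sigma> n i \<le> 1" using mu by simp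
  have "ln m0 \<le> ln (muProj d N a t \<mu> \<sigma> n i)" using lo m0 by simp
  moreover have "ln (muProj d N a t \<mu> \<sigma> n i) \<le> 0" using hi lo m0 by simp
  ultimately show ?thesis by simp
qed



theorem lemma8p2:
  fixes d N :: nat and a t :: "nat \<Rightarrow> nat \<Rightarrow> real" and \<mu> :: "nat \<Rightarrow> real"
  assumes "1 \<le> d" and "1 \<le> N"
    and "\<forall>i\<in>{1..N}. \<forall>n\<in>{1..d}. 0 < \<bar>a i n\<bar> \<and> \<bar>a i n\<bar> < 1"
    and "\<forall>i\<in>{1..N}. \<forall>j\<in>{1..N}. i \<noteq> j \<longrightarrow>
           (\<exists>x\<in>cube d. \<exists>c\<in>{1..d}. fmap a t i x c \<noteq> fmap a t j x c)"
    and "\<forall>i\<in>{1..N}. 0 < \<mu> i" and "(\<Sum>i\<in>{1..N}. \<mu> i) = 1"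
  shows "((\<lambda>q. ereal (-1 / q) * (SUP \<sigma>\<in>Aset d N a. SUP P\<in>Qset d N a t \<sigma>. ereal (tq d N a t \<mu> q \<sigma> P)))
            \<longlongrightarrow> (INF \<sigma>\<in>Aset d N a. INF P\<in>Qset d N a t \<sigma>. ereal (Sfun d N a t \<mu> \<sigma> P))) at_top
       \<and> ((\<lambda>q. ereal (-1 / q) * (SUP \<sigma>\<in>Aset d N a. SUP P\<in>Qset d N a t \<sigma>. ereal (tq d N a t \<mu> q \<sigma> P)))
            \<longlongrightarrow> (SUP \<sigma>\<in>Aset d N a. SUP P\<in>Qset d N a t \<sigma>. ereal (Sfun d N a t \<mu> \<sigma> P))) at_bot"
proof -
  define K where "K = (\<lambda>(i,k). - ln (lam a i k)) ` ({1..N}\<times>{1..d})"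
  define c0 where "c0 = Min K"
  have Kfin: "finite K" unfolding K_def by simp
  have Kne: "K \<noteq> {}" unfolding K_def using assms(1,2) by auto
  have Kpos: "\<forall>x\<in>K. 0 < x"
  proof
    fix x assume "x \<in> K"
    then obtain i k where ik: "i \<in> {1..N}" "k \<in> {1..d}" "x = - ln (lam a i k)" unfolding K_def by auto
    then have "0 < lam a i k" "lam a i k < 1" using assms(3) unfolding lam_def by auto
    then show "0 < x" using ik(3) by simp
  qed
  have c0pos: "0 < c0" unfolding c0_def using Kfin Kne Kpos by simp
  have c0le: "\<forall>i\<in>{1..N}. \<forall>k\<in>{1..d}. c0 \<le> - ln (lam a i k)"
  proof (intro ballI)
    fix i k assume "i \<in> {1..N}" "k \<in> {1..d}"
    then have "- ln (lam a i k) \<in> K" unfolding K_def by force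
    then show "c0 \<le> - ln (lam a i k)" unfolding c0_def using Kfin by simp
  qed
  define m0 where "m0 = Min (\<mu> ` {1..N})"
  have m0pos: "0 < m0" unfolding m0_def using assms(2,5) by simp
  have m0le: "\<forall>i\<in>{1..N}. m0 \<le> \<mu> i" unfolding m0_def by simp
  define M where "M = - ln m0"
  define Eq where "Eq \<sigma> P = (\<Sum>n\<in>{1..d}. Cn d N a t \<sigma> P n * ent d N a t \<sigma> P n)" for \<sigma> P
  have tq_eq: "tq d N a t \<mu> q \<sigma> P = Eq \<sigma> P - q * Sfun d N a t \<mu> \<sigma> P" for q \<sigma> P
    unfolding tq_def Eq_def Sfun_def
    by (simp add: distrib_left sum.distrib sum_distrib_left algebra_simps)
  define B where "B = max (real d * (1/c0) * real N) (real d * (1/c0) * M)"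
  have bd: "\<forall>\<sigma>\<in>Aset d N a. \<forall>P\<in>Qset d N a t \<sigma>. \<bar>Eq \<sigma> P\<bar> \<le> B \<and> \<bar>Sfun d N a t \<mu> \<sigma> P\<bar> \<le> B"
  proof (intro ballI conjI)
    fix \<sigma> P assume s: "\<sigma> \<in> Aset d N a" and P: "P \<in> Qset d N a t \<sigma>"
    have perm: "\<sigma> permutes {1..d}" using s unfolding Aset_def by auto
    have PP: "P \<in> Pset d N a t \<sigma>" using P unfolding Qset_def by auto
    have C0: "0 \<le> Cn d N a t \<sigma> P n" if "n \<in> {1..d}" for n using P that unfolding Qset_def by auto
    have C1: "Cn d N a t \<sigma> P n \<le> 1/c0" if "n \<in> {1..d}" for n
      using C_upper[OF P that perm c0pos c0le] .
    have "\<bar>Eq \<sigma> P\<bar> \<le> (\<Sum>n\<in>{1..d}. \<bar>Cn d N a t \<sigma> P n * ent d N a t \<sigma> P n\<bar>)"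
      unfolding Eq_def by (rule sum_abs)
    also have "\<dots> \<le> (\<Sum>n\<in>{1..d}. 1/c0 * real N)"
    proof (intro sum_mono)
      fix n assume n: "n \<in> {1..d}"
      have "\<bar>Cn d N a t \<sigma> P n * ent d N a t \<sigma> P n\<bar> = Cn d N a t \<sigma> P n * \<bar>ent d N a t \<sigma> P n\<bar>"
        using C0[OF n] by (simp add: abs_mult)
      also have "\<dots> \<le> 1/c0 * real N"
        using C0[OF n] C1[OF n] ent_bound[OF PP n] c0pos by (intro mult_mono) auto
      finally show "\<bar>Cn d N a t \<sigma> P n * ent d N a t \<sigma> P n\<bar> \<le> 1/c0 * real N" .
    qed
    also have "\<dots> = real d * (1/c0) * real N" by simp
    also have "\<dots> \<le> B" unfolding B_def by simp
    finally show "\<bar>Eq \<sigma> P\<bar> \<le> B" .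
    have L: "\<bar>\<Sum>i\<in>Iset d N a t \<sigma> n. P n i * ln (muProj d N a t \<mu> \<sigma> n i)\<bar> \<le> M" if n: "n \<in> {1..d}" for n
    proof -
      have "\<bar>\<Sum>i\<in>Iset d N a t \<sigma> n. P n i * ln (muProj d N a t \<mu> \<sigma> n i)\<bar>
          \<le> (\<Sum>i\<in>Iset d N a t \<sigma> n. \<bar>P n i * ln (muProj d N a t \<mu> \<sigma> n i)\<bar>)" by (rule sum_abs)
      also have "\<dots> \<le> (\<Sum>i\<in>Iset d N a t \<sigma> n. P n i * M)"
      proof (intro sum_mono)
        fix i assume i: "i \<in> Iset d N a t \<sigma> n"
        have "\<bar>P n i * ln (muProj d N a t \<mu> \<sigma> n i)\<bar> = P n i * \<bar>ln (muProj d N a t \<mu> \<sigma> n i)\<bar>"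
          using P_props(1)[OF PP n i] by (simp add: abs_mult)
        also have "\<dots> \<le> P n i * M" unfolding M_def
          using P_props(1)[OF PP n i] mu_bound[OF i assms(5,6) m0le m0pos] by (intro mult_left_mono) auto
        finally show "\<bar>P n i * ln (muProj d N a t \<mu> \<sigma> n i)\<bar> \<le> P n i * M" .
      qed
      also have "\<dots> = M" using P_sum[OF PP n] by (simp add: sum_distrib_right[symmetric])
      finally show ?thesis .
    qed
    have "\<bar>Sfun d N a t \<mu> \<sigma> P\<bar> \<le> (\<Sum>n\<in>{1..d}. \<bar>Cn d N a t \<sigma> P n * (\<Sum>i\<in>Iset d N a t \<sigma> n. P n i * ln (muProj d N a t \<mu> \<sigma> n i))\<bar>)"
      unfolding Sfun_def abs_minus_cancel by (rule sum_abs)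
    also have "\<dots> \<le> (\<Sum>n\<in>{1..d}. 1/c0 * M)"
    proof (intro sum_mono)
      fix n assume n: "n \<in> {1..d}"
      show "\<bar>Cn d N a t \<sigma> P n * (\<Sum>i\<in>Iset d N a t \<sigma> n. P n i * ln (muProj d N a t \<mu> \<sigma> n i))\<bar> \<le> 1/c0 * M"
        unfolding abs_mult using C0[OF n] C1[OF n] L[OF n] c0pos by (intro mult_mono) auto
    qed
    also have "\<dots> = real d * (1/c0) * M" by simp
    also have "\<dots> \<le> B" unfolding B_def by simp
    finally show "\<bar>Sfun d N a t \<mu> \<sigma> P\<bar> \<le> B" .
  qed
  show ?thesis unfolding tq_eq
    using abstract[where A="Aset d N a" and Q="Qset d N a t" and E=Eq and S="Sfun d N a t \<mu>" and B=B, OF bd] .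
qed


end
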